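(* Let $\alpha=(\alpha_k)_{k\in\mathbb{N}}\in\ell^2$ and let $I=[a,b]$ be an interval in $\mathbb{N}$ ($a\le b$). Then $$\tfrac12 J(I)\le K(I)=\tfrac{1}{\sqrt2}L(I)\le 2J(I).$$
   Context: $\mathbb{N}=\{0,1,2,\dots\}$; intervals are sets $[a,b]\cap\mathbb{N}$. Notation: $\|f\|_{2,I}=(\sum_{k\in I}|f(k)|^2)^{1/2}$, $\mu(I)=\sum_{k\in I}|\alpha_k|^2$, $S_f(k)=\sum_{j=0}^k f(j)$, and for $\mu(I)>0$, $(S_f)_I=\mu(I)^{-1}\sum_{k\in I}S_f(k)|\alpha_k|^2$. $L(I)$: with $l(I,f)=\sum_{k\in I}\sum_{n\in I\setminus\{k\}}|\alpha_k\alpha_n\sum_{j=\min(k,n)+1}^{\max(k,n)}f(j)|^2$, set $L(I)=(\sup_{\|f\|_{2,I}\le1}l(I,f)/\mu(I))^{1/2}$ (sup over $f\in\ell^2$ supported in $I$), and $L(I)=0$ if $\alpha$ vanishes on $I$. $K(I)=\sup_{\|f\|_{2,I}\le1}\big(\sum_{k\in I}|S_f(k)-(S_f)_I|^2|\alpha_k|^2\big)^{1/2}$ (sup over $f\in\ell^2$ supported in $I$; this is $0$ if $\alpha$ vanishes on $I$). $J(I)=\inf_{c\in I}\max(A_c,B_c)$ where $A_c=\sup_{a\le s\le c}(c-s)^{1/2}(\sum_{k=a}^s|\alpha_k|^2)^{1/2}$ and $B_c=\sup_{c\le s\le b}(s-c)^{1/2}(\sum_{k=s}^b|\alpha_k|^2)^{1/2}$.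 *)

theory Defs
  imports "HOL-Analysis.Analysis"
begin

definition l2norm_on :: "(nat \<Rightarrow> complex) \<Rightarrow> nat set \<Rightarrow> real" where
  "l2norm_on f I = sqrt (\<Sum>k\<in>I. (cmod (f k))\<^sup>2)"

definition mu :: "(nat \<Rightarrow> complex) \<Rightarrow> nat set \<Rightarrow> real" where
  "mu \<alpha> I = (\<Sum>k\<in>I. (cmod (\<alpha> k))\<^sup>2)"

definition Sf :: "(nat \<Rightarrow> complex) \<Rightarrow> nat \<Rightarrow> complex" where
  "Sf f k = (\<Sum>j=0..k. f j)"

definition Sf_avg :: "(nat \<Rightarrow> complex) \<Rightarrow> (nat \<Rightarrow> complex) \<Rightarrow> nat set \<Rightarrow> complex" where
  "Sf_avg \<alpha> f I = complex_of_real (inverse (mu \<alpha> I)) *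
      (\<Sum>k\<in>I. Sf f k * complex_of_real ((cmod (\<alpha> k))\<^sup>2))"

definition test_fns :: "nat set \<Rightarrow> (nat \<Rightarrow> complex) set" where
  "test_fns I = {f. (\<forall>k. k \<notin> I \<longrightarrow> f k = 0) \<and> l2norm_on f I \<le> 1}"

definition lfun :: "(nat \<Rightarrow> complex) \<Rightarrow> nat set \<Rightarrow> (nat \<Rightarrow> complex) \<Rightarrow> real" where
  "lfun \<alpha> I f = (\<Sum>k\<in>I. \<Sum>n\<in>I - {k}.
      (cmod (\<alpha> k * \<alpha> n * (\<Sum>j\<in>{min k n + 1..max k n}. f j)))\<^sup>2)"

definition Lc :: "(nat \<Rightarrow> complex) \<Rightarrow> nat set \<Rightarrow> real" where
  "Lc \<alpha> I = (if (\<forall>k\<in>I. \<alpha> k = 0) then 0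
     else sqrt (Sup ((\<lambda>f. lfun \<alpha> I f / mu \<alpha> I) ` test_fns I)))"

definition Kc :: "(nat \<Rightarrow> complex) \<Rightarrow> nat set \<Rightarrow> real" where
  "Kc \<alpha> I = Sup ((\<lambda>f. sqrt (\<Sum>k\<in>I. (cmod (Sf f k - Sf_avg \<alpha> f I))\<^sup>2 * (cmod (\<alpha> k))\<^sup>2))
                   ` test_fns I)"

definition Ac :: "(nat \<Rightarrow> complex) \<Rightarrow> nat \<Rightarrow> nat \<Rightarrow> real" where
  "Ac \<alpha> a c = Max ((\<lambda>s. sqrt (real (c - s)) * sqrt (\<Sum>k=a..s. (cmod (\<alpha> k))\<^sup>2)) ` {a..c})"

definition Bc :: "(nat \<Rightarrow> complex) \<Rightarrow> nat \<Rightarrow> nat \<Rightarrow> real" where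
  "Bc \<alpha> b c = Max ((\<lambda>s. sqrt (real (s - c)) * sqrt (\<Sum>k=s..b. (cmod (\<alpha> k))\<^sup>2)) ` {c..b})"

definition Jc :: "(nat \<Rightarrow> complex) \<Rightarrow> nat \<Rightarrow> nat \<Rightarrow> real" where
  "Jc \<alpha> a b = Min ((\<lambda>c. max (Ac \<alpha> a c) (Bc \<alpha> b c)) ` {a..b})"

end

theory Submission
  imports Defs
begin


lemma sum_inv_sqrt: "(\<Sum>i=1..m. 1 / sqrt (real i)) \<le> 2 * sqrt (real m)"
proof (induction m)
  case 0 then show ?case by simp
next
  case (Suc m)
  have am: "sqrt (real m) * sqrt (real m + 1) \<le> real m + 1/2"
  proof -
    have "(sqrt (real m) * sqrt (real m + 1))^2 \<le> (real m + 1/2)^2"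
      by (simp add: power_mult_distrib power2_eq_square algebra_simps)
    then show ?thesis by (rule power2_le_imp_le) simp
  qed
  have p: "sqrt (real m + 1) > 0" by simp
  have "2 * sqrt (real m) + 1 / sqrt (real m + 1) \<le> 2 * sqrt (real m + 1)"
  proof -
    have "(2 * sqrt (real m) + 1 / sqrt (real m + 1)) * sqrt (real m + 1) = 2 * (sqrt (real m) * sqrt (real m + 1)) + 1"
      using p by (simp add: field_simps)
    also have "\<dots> \<le> 2 * (real m + 1)" using am by simp
    also have "\<dots> = 2 * sqrt (real m + 1) * sqrt (real m + 1)"
      using real_sqrt_mult_self[of "real m + 1"] by (simp add: mult.assoc)
    finally show ?thesis using p by (simp add: mult_le_cancel_right)
  qed
  then show ?case using Suc by (simp add: add.commute)
qed

lemma sum_swap_tri: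
  fixes F :: "nat \<Rightarrow> nat \<Rightarrow> 'a::comm_monoid_add"
  shows "(\<Sum>m=1..N. \<Sum>i=1..m. F i m) = (\<Sum>i=1..N. \<Sum>m=i..N. F i m)"
proof (induction N)
  case 0 then show ?case by simp
next
  case (Suc N)
  have "(\<Sum>i=1..Suc N. \<Sum>m=i..Suc N. F i m) = (\<Sum>i=1..Suc N. (\<Sum>m=i..N. F i m) + F i (Suc N))"
    by (rule sum.cong) (auto simp: sum.cl_ivl_Suc)
  also have "\<dots> = (\<Sum>i=1..Suc N. \<Sum>m=i..N. F i m) + (\<Sum>i=1..Suc N. F i (Suc N))"
    by (simp add: sum.distrib)
  also have "(\<Sum>i=1..Suc N. \<Sum>m=i..N. F i m) = (\<Sum>i=1..N. \<Sum>m=i..N. F i m)"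
    by (simp add: sum.cl_ivl_Suc)
  finally show ?case using Suc by (simp add: sum.cl_ivl_Suc[of _ 1 N])
qed

lemma tail_bound:
  fixes w :: "nat \<Rightarrow> real"
  assumes w: "\<And>m. 0 \<le> w m"
    and cond: "\<And>s. 1 \<le> s \<Longrightarrow> s \<le> N \<Longrightarrow> real s * (\<Sum>m=s..N. w m) \<le> A2"
    and i: "1 \<le> i" "i \<le> N"
  shows "(\<Sum>m=i..N. w m * sqrt m) \<le> sqrt i * (\<Sum>m=i..N. w m) + A2 * (1/sqrt i - 1/sqrt N)"
  using i(2) i(1)
proof (induction i rule: inc_induct)
  case base then show ?case by simp
next
  case (step n)
  define R where "R = (\<Sum>m=Suc n..N. w m)"
  have R0: "0 \<le> R" unfolding R_def by (rule sum_nonneg) (use w in auto)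
  have c1: "real (Suc n) * R \<le> A2" unfolding R_def using cond[of "Suc n"] step by auto
  have A2: "0 \<le> A2" using c1 R0 by (meson mult_nonneg_nonneg of_nat_0_le_iff order_trans)
  have s1: "(\<Sum>m=n..N. w m * sqrt m) = w n * sqrt n + (\<Sum>m=Suc n..N. w m * sqrt m)"
    using step by (simp add: sum.atLeast_Suc_atMost)
  have s2: "(\<Sum>m=n..N. w m) = w n + R"
    using step unfolding R_def by (simp add: sum.atLeast_Suc_atMost)
  define d where "d = sqrt (real n + 1) - sqrt n"
  have d0: "0 \<le> d" unfolding d_def by simp
  have pn: "sqrt n > 0" using step by simp
  have pn1: "sqrt (real n + 1) > 0" by simp
  have pp: "sqrt n * sqrt (real n + 1) \<le> real n + 1"
  proof -
    have "sqrt n \<le> sqrt (real n + 1)" by simp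
    then have "sqrt n * sqrt (real n + 1) \<le> sqrt (real n + 1) * sqrt (real n + 1)"
      by (rule mult_right_mono) simp_all
    moreover have "sqrt (real n + 1) * sqrt (real n + 1) = real n + 1"
      by (metis real_sqrt_mult_self abs_of_nonneg of_nat_0_le_iff add_nonneg_nonneg zero_le_one)
    ultimately show ?thesis by linarith
  qed
  have eq: "1/sqrt n - 1/sqrt (real n + 1) = d / (sqrt n * sqrt (real n + 1))"
    unfolding d_def using pn pn1 by (simp add: field_simps)
  have key: "d * R \<le> A2 * (1/sqrt n - 1/sqrt (real n + 1))"
  proof -
    have "d * R * (sqrt n * sqrt (real n + 1)) \<le> d * R * (real n + 1)"
      using pp d0 R0 by (simp add: mult_left_mono)
    also have "\<dots> = d * (real (Suc n) * R)" by (simp add: algebra_simps)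
    also have "\<dots> \<le> d * A2" using c1 d0 by (simp add: mult_left_mono)
    finally have "d * R * (sqrt n * sqrt (real n + 1)) \<le> d * A2" .
    then have "d * R \<le> d * A2 / (sqrt n * sqrt (real n + 1))"
      using pn pn1 by (simp add: field_simps)
    then show ?thesis using eq by (simp add: mult.commute)
  qed
  have IH: "(\<Sum>m=Suc n..N. w m * sqrt m) \<le> sqrt (real n + 1) * R + A2 * (1/sqrt (real n + 1) - 1/sqrt N)"
    using step.IH unfolding R_def by (simp add: add.commute)
  show ?case unfolding s1 s2 using IH key unfolding d_def by (simp add: algebra_simps)
qed

lemma tail_bound2:
  fixes w :: "nat \<Rightarrow> real"
  assumes w: "\<And>m. 0 \<le> w m"
    and cond: "\<And>s. 1 \<le> s \<Longrightarrow> s \<le> N \<Longrightarrow> real s * (\<Sum>m=s..N. w m) \<le> A2"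
    and i: "1 \<le> i" "i \<le> N"
  shows "(\<Sum>m=i..N. w m * sqrt m) \<le> 2 * A2 / sqrt i"
proof -
  have pi: "sqrt i > 0" using i by simp
  have A2: "0 \<le> A2" using cond[of N] i w[of N] by (simp, meson mult_nonneg_nonneg of_nat_0_le_iff order_trans)
  have "sqrt i * (\<Sum>m=i..N. w m) = (real i * (\<Sum>m=i..N. w m)) / sqrt i"
    using pi by (simp add: field_simps)
  also have "\<dots> \<le> A2 / sqrt i" using cond[OF i] pi by (simp add: divide_right_mono)
  finally have 1: "sqrt i * (\<Sum>m=i..N. w m) \<le> A2 / sqrt i" .
  have "A2 * (1/sqrt i - 1/sqrt N) \<le> A2 * (1/sqrt i)" using A2 by (intro mult_left_mono) auto
  then have 2: "A2 * (1/sqrt i - 1/sqrt N) \<le> A2 / sqrt i" by simp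
  show ?thesis using tail_bound[OF w cond i] 1 2 by simp
qed

lemma hardy:
  fixes w g :: "nat \<Rightarrow> real"
  assumes w: "\<And>m. 0 \<le> w m"
    and cond: "\<And>s. 1 \<le> s \<Longrightarrow> s \<le> N \<Longrightarrow> real s * (\<Sum>m=s..N. w m) \<le> A2"
  shows "(\<Sum>m=1..N. w m * (\<Sum>i=1..m. g i)^2) \<le> 4 * A2 * (\<Sum>i=1..N. (g i)^2)"
proof -
  have cs: "(\<Sum>i=1..m. g i)^2 \<le> (\<Sum>i=1..m. (g i)^2 * sqrt i) * (2 * sqrt m)" for m
  proof -
    have "(\<Sum>i=1..m. g i) = (\<Sum>i=1..m. (g i * sqrt (sqrt i)) * (1 / sqrt (sqrt i)))"
      by (rule sum.cong) auto
    then have "(\<Sum>i=1..m. g i)^2 \<le> (\<Sum>i=1..m. (g i * sqrt (sqrt i))^2) * (\<Sum>i=1..m. (1 / sqrt (sqrt i))^2)"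
      using Cauchy_Schwarz_ineq_sum by metis
    also have "(\<Sum>i=1..m. (g i * sqrt (sqrt i))^2) = (\<Sum>i=1..m. (g i)^2 * sqrt i)"
      by (rule sum.cong) (auto simp: power_mult_distrib)
    also have "(\<Sum>i=1..m. (1 / sqrt (sqrt i))^2) = (\<Sum>i=1..m. 1 / sqrt i)"
      by (rule sum.cong) (auto simp: power_divide)
    also have "(\<Sum>i=1..m. (g i)^2 * sqrt i) * (\<Sum>i=1..m. 1 / sqrt i) \<le> (\<Sum>i=1..m. (g i)^2 * sqrt i) * (2 * sqrt m)"
      by (rule mult_left_mono[OF sum_inv_sqrt]) (auto intro: sum_nonneg)
    finally show ?thesis .
  qed
  have "(\<Sum>m=1..N. w m * (\<Sum>i=1..m. g i)^2) \<le> (\<Sum>m=1..N. w m * ((\<Sum>i=1..m. (g i)^2 * sqrt i) * (2 * sqrt m)))"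
    by (rule sum_mono) (rule mult_left_mono[OF cs w])
  also have "\<dots> = (\<Sum>m=1..N. \<Sum>i=1..m. ((g i)^2 * sqrt i) * (2 * (w m * sqrt m)))"
    by (simp add: sum_distrib_left sum_distrib_right algebra_simps)
  also have "\<dots> = (\<Sum>i=1..N. \<Sum>m=i..N. ((g i)^2 * sqrt i) * (2 * (w m * sqrt m)))"
    by (rule sum_swap_tri)
  also have "\<dots> = (\<Sum>i=1..N. ((g i)^2 * sqrt i) * 2 * (\<Sum>m=i..N. w m * sqrt m))"
    by (simp add: sum_distrib_left algebra_simps)
  also have "\<dots> \<le> (\<Sum>i=1..N. ((g i)^2 * sqrt i) * 2 * (2 * A2 / sqrt i))"
    by (rule sum_mono, rule mult_left_mono[OF tail_bound2[OF w cond]]) auto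
  also have "\<dots> = (\<Sum>i=1..N. 4 * A2 * (g i)^2)"
    by (rule sum.cong) auto
  also have "\<dots> = 4 * A2 * (\<Sum>i=1..N. (g i)^2)" by (simp add: sum_distrib_left)
  finally show ?thesis .
qed



lemma real_var_shift:
  fixes w x :: "nat \<Rightarrow> real"
  assumes "(\<Sum>k\<in>I. w k) * m = (\<Sum>k\<in>I. w k * x k)"
  shows "(\<Sum>k\<in>I. w k * (x k - z)^2) = (\<Sum>k\<in>I. w k * (x k - m)^2) + (\<Sum>k\<in>I. w k) * (m - z)^2"
proof -
  have "(\<Sum>k\<in>I. w k * (x k - z)^2) = (\<Sum>k\<in>I. w k * (x k - m)^2 + 2 * (m - z) * (w k * x k) - 2 * (m - z) * m * w k + w k * (m - z)^2)"
    by (rule sum.cong) (auto simp: power2_eq_square algebra_simps)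
  also have "\<dots> = (\<Sum>k\<in>I. w k * (x k - m)^2) + 2 * (m - z) * (\<Sum>k\<in>I. w k * x k) - 2 * (m - z) * m * (\<Sum>k\<in>I. w k) + (\<Sum>k\<in>I. w k) * (m - z)^2"
    by (simp add: sum.distrib sum_subtractf sum_distrib_left sum_distrib_right)
  also have "\<dots> = (\<Sum>k\<in>I. w k * (x k - m)^2) + (\<Sum>k\<in>I. w k) * (m - z)^2"
    by (simp only: assms[symmetric]) (simp add: power2_eq_square algebra_simps)
  finally show ?thesis .
qed

lemma real_var_pairs:
  fixes w x :: "nat \<Rightarrow> real"
  assumes "(\<Sum>k\<in>I. w k) * m = (\<Sum>k\<in>I. w k * x k)"
  shows "(\<Sum>k\<in>I. \<Sum>n\<in>I. w k * w n * (x k - x n)^2) = 2 * (\<Sum>k\<in>I. w k) * (\<Sum>k\<in>I. w k * (x k - m)^2)"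
proof -
  let ?W = "\<Sum>k\<in>I. w k" and ?X = "\<Sum>k\<in>I. w k * x k" and ?Q = "\<Sum>k\<in>I. w k * (x k)^2"
  have "(\<Sum>k\<in>I. \<Sum>n\<in>I. w k * w n * (x k - x n)^2) = (\<Sum>k\<in>I. \<Sum>n\<in>I. (w k * (x k)^2) * w n - 2 * (w k * x k) * (w n * x n) + w k * (w n * (x n)^2))"
    by (intro sum.cong) (auto simp: power2_eq_square algebra_simps)
  also have "\<dots> = (\<Sum>k\<in>I. (w k * (x k)^2) * ?W - 2 * (w k * x k) * ?X + w k * ?Q)"
    by (simp add: sum.distrib sum_subtractf sum_distrib_left)
  also have "\<dots> = ?Q * ?W - 2 * ?X * ?X + ?W * ?Q"
  proof -
    have a: "(\<Sum>k\<in>I. (w k * (x k)^2) * ?W) = ?Q * ?W" by (simp add: sum_distrib_right)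
    have b: "(\<Sum>k\<in>I. 2 * (w k * x k) * ?X) = 2 * ?X * ?X"
      by (subst sum_distrib_right[symmetric]) (simp add: sum_distrib_left[symmetric])
    have c: "(\<Sum>k\<in>I. w k * ?Q) = ?W * ?Q" by (simp add: sum_distrib_right)
    show ?thesis by (simp only: sum.distrib sum_subtractf a b c)
  qed
  also have "\<dots> = 2 * ?W * ?Q - 2 * ?X * ?X" by (simp add: algebra_simps)
  finally have 1: "(\<Sum>k\<in>I. \<Sum>n\<in>I. w k * w n * (x k - x n)^2) = 2 * ?W * ?Q - 2 * ?X * ?X" .
  have "(\<Sum>k\<in>I. w k * (x k - m)^2) = (\<Sum>k\<in>I. w k * (x k)^2 - 2 * m * (w k * x k) + m^2 * w k)"
    by (intro sum.cong) (auto simp: power2_eq_square algebra_simps)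
  also have "\<dots> = ?Q - 2 * m * ?X + m^2 * ?W"
    by (simp add: sum.distrib sum_subtractf sum_distrib_left)
  finally have 2: "(\<Sum>k\<in>I. w k * (x k - m)^2) = ?Q - 2 * m * ?X + m^2 * ?W" .
  show ?thesis unfolding 1 2 using assms[symmetric] by (simp add: power2_eq_square algebra_simps)
qed

lemma cplx_split:
  fixes S :: "nat \<Rightarrow> complex" and w :: "nat \<Rightarrow> real"
  shows "(\<Sum>k\<in>I. (cmod (S k - z))^2 * w k) = (\<Sum>k\<in>I. w k * (Re (S k) - Re z)^2) + (\<Sum>k\<in>I. w k * (Im (S k) - Im z)^2)"
  by (simp add: cmod_power2 sum.distrib algebra_simps)

lemma cplx_mean:
  fixes S :: "nat \<Rightarrow> complex" and w :: "nat \<Rightarrow> real"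
  assumes "complex_of_real (\<Sum>k\<in>I. w k) * m = (\<Sum>k\<in>I. S k * complex_of_real (w k))"
  shows "(\<Sum>k\<in>I. w k) * Re m = (\<Sum>k\<in>I. w k * Re (S k))"
    and "(\<Sum>k\<in>I. w k) * Im m = (\<Sum>k\<in>I. w k * Im (S k))"
proof -
  have "Re (complex_of_real (\<Sum>k\<in>I. w k) * m) = Re (\<Sum>k\<in>I. S k * complex_of_real (w k))" using assms by simp
  then show "(\<Sum>k\<in>I. w k) * Re m = (\<Sum>k\<in>I. w k * Re (S k))" by (simp add: Re_sum mult.commute)
  have "Im (complex_of_real (\<Sum>k\<in>I. w k) * m) = Im (\<Sum>k\<in>I. S k * complex_of_real (w k))" using assms by simp
  then show "(\<Sum>k\<in>I. w k) * Im m = (\<Sum>k\<in>I. w k * Im (S k))" by (simp add: Im_sum mult.commute)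
qed

lemma cplx_var_shift:
  fixes S :: "nat \<Rightarrow> complex" and w :: "nat \<Rightarrow> real"
  assumes "complex_of_real (\<Sum>k\<in>I. w k) * m = (\<Sum>k\<in>I. S k * complex_of_real (w k))"
  shows "(\<Sum>k\<in>I. (cmod (S k - z))^2 * w k) = (\<Sum>k\<in>I. (cmod (S k - m))^2 * w k) + (\<Sum>k\<in>I. w k) * (cmod (m - z))^2"
  unfolding cplx_split
  using real_var_shift[of w I "Re m" "\<lambda>k. Re (S k)" "Re z", OF cplx_mean(1)[OF assms]]
        real_var_shift[of w I "Im m" "\<lambda>k. Im (S k)" "Im z", OF cplx_mean(2)[OF assms]]
  by (simp add: cmod_power2 algebra_simps)

lemma cplx_var_pairs:
  fixes S :: "nat \<Rightarrow> complex" and w :: "nat \<Rightarrow> real"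
  assumes "complex_of_real (\<Sum>k\<in>I. w k) * m = (\<Sum>k\<in>I. S k * complex_of_real (w k))"
  shows "(\<Sum>k\<in>I. \<Sum>n\<in>I. w k * w n * (cmod (S k - S n))^2) = 2 * (\<Sum>k\<in>I. w k) * (\<Sum>k\<in>I. (cmod (S k - m))^2 * w k)"
proof -
  have "(\<Sum>k\<in>I. \<Sum>n\<in>I. w k * w n * (cmod (S k - S n))^2) =
     (\<Sum>k\<in>I. \<Sum>n\<in>I. w k * w n * (Re (S k) - Re (S n))^2) + (\<Sum>k\<in>I. \<Sum>n\<in>I. w k * w n * (Im (S k) - Im (S n))^2)"
    by (simp add: cmod_power2 sum.distrib algebra_simps)
  also have "\<dots> = 2 * (\<Sum>k\<in>I. w k) * ((\<Sum>k\<in>I. w k * (Re (S k) - Re m)^2) + (\<Sum>k\<in>I. w k * (Im (S k) - Im m)^2))"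
    using real_var_pairs[of w I "Re m" "\<lambda>k. Re (S k)", OF cplx_mean(1)[OF assms]]
        real_var_pairs[of w I "Im m" "\<lambda>k. Im (S k)", OF cplx_mean(2)[OF assms]]
    by (simp add: algebra_simps)
  also have "\<dots> = 2 * (\<Sum>k\<in>I. w k) * (\<Sum>k\<in>I. (cmod (S k - m))^2 * w k)"
    unfolding cplx_split ..
  finally show ?thesis .
qed



lemma Sf_split: "k \<le> n \<Longrightarrow> Sf f n = Sf f k + (\<Sum>j=Suc k..n. f j)"
proof (induction n rule: dec_induct)
  case base then show ?case by simp
next
  case (step n) then show ?case by (simp add: Sf_def sum.cl_ivl_Suc)
qed

lemma cmod_Sf_diff: "cmod (\<Sum>j\<in>{min k n + 1..max k n}. f j) = cmod (Sf f k - Sf f n)"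
proof (cases "k \<le> n")
  case True then show ?thesis using Sf_split[OF True, of f] by (simp add: max_def min_def)
next
  case False
  then have "n \<le> k" by simp
  then show ?thesis using Sf_split[of n k f] False by (simp add: max_def min_def norm_minus_commute)
qed

lemma avg_mean:
  assumes "mu \<alpha> I \<noteq> 0"
  shows "complex_of_real (\<Sum>k\<in>I. (cmod (\<alpha> k))^2) * Sf_avg \<alpha> f I = (\<Sum>k\<in>I. Sf f k * complex_of_real ((cmod (\<alpha> k))^2))"
proof -
  have "complex_of_real (mu \<alpha> I) * Sf_avg \<alpha> f I = (complex_of_real (mu \<alpha> I) * complex_of_real (inverse (mu \<alpha> I))) * (\<Sum>k\<in>I. Sf f k * complex_of_real ((cmod (\<alpha> k))^2))"
    unfolding Sf_avg_def by (simp only: mult.assoc)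
  also have "complex_of_real (mu \<alpha> I) * complex_of_real (inverse (mu \<alpha> I)) = 1"
    by (metis assms of_real_1 of_real_mult right_inverse)
  finally show ?thesis unfolding mu_def by simp
qed

lemma avg_le:
  assumes "finite I"
  shows "(\<Sum>k\<in>I. (cmod (Sf f k - Sf_avg \<alpha> f I))^2 * (cmod (\<alpha> k))^2) \<le> (\<Sum>k\<in>I. (cmod (Sf f k - z))^2 * (cmod (\<alpha> k))^2)"
proof (cases "mu \<alpha> I = 0")
  case True
  then have "\<forall>k\<in>I. (cmod (\<alpha> k))^2 = 0" unfolding mu_def using assms
    by (subst sum_nonneg_eq_0_iff[symmetric]) auto
  then show ?thesis by (simp add: sum_nonneg)
next
  case False
  from cplx_var_shift[OF avg_mean[OF False], where z=z] show ?thesis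
    unfolding mu_def by (simp add: sum_nonneg)
qed

lemma lfun_eq:
  assumes "finite I" "mu \<alpha> I \<noteq> 0"
  shows "lfun \<alpha> I f = 2 * mu \<alpha> I * (\<Sum>k\<in>I. (cmod (Sf f k - Sf_avg \<alpha> f I))^2 * (cmod (\<alpha> k))^2)"
proof -
  have m: "complex_of_real (\<Sum>k\<in>I. (cmod (\<alpha> k))^2) * Sf_avg \<alpha> f I = (\<Sum>k\<in>I. Sf f k * complex_of_real ((cmod (\<alpha> k))^2))"
    by (rule avg_mean[OF assms(2)])
  have "lfun \<alpha> I f = (\<Sum>k\<in>I. \<Sum>n\<in>I. (cmod (\<alpha> k))^2 * (cmod (\<alpha> n))^2 * (cmod (Sf f k - Sf f n))^2)"
    unfolding lfun_def
  proof (rule sum.cong[OF refl])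
    fix k assume k: "k \<in> I"
    have "(\<Sum>n\<in>I - {k}. (cmod (\<alpha> k * \<alpha> n * (\<Sum>j\<in>{min k n + 1..max k n}. f j)))\<^sup>2)
      = (\<Sum>n\<in>I - {k}. (cmod (\<alpha> k))^2 * (cmod (\<alpha> n))^2 * (cmod (Sf f k - Sf f n))^2)"
      using cmod_Sf_diff[where k=k and f=f] by (intro sum.cong) (auto simp: norm_mult power_mult_distrib)
    also have "\<dots> = (\<Sum>n\<in>I. (cmod (\<alpha> k))^2 * (cmod (\<alpha> n))^2 * (cmod (Sf f k - Sf f n))^2)"
      using k assms(1) by (simp add: sum_diff1)
    finally show "(\<Sum>n\<in>I - {k}. (cmod (\<alpha> k * \<alpha> n * (\<Sum>j\<in>{min k n + 1..max k n}. f j)))\<^sup>2)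
      = (\<Sum>n\<in>I. (cmod (\<alpha> k))^2 * (cmod (\<alpha> n))^2 * (cmod (Sf f k - Sf f n))^2)" .
  qed
  also have "\<dots> = 2 * mu \<alpha> I * (\<Sum>k\<in>I. (cmod (Sf f k - Sf_avg \<alpha> f I))^2 * (cmod (\<alpha> k))^2)"
    using cplx_var_pairs[OF m] unfolding mu_def .
  finally show ?thesis .
qed

lemma hardyR:
  fixes w g :: "nat \<Rightarrow> real"
  assumes w: "\<And>m. 0 \<le> w m" and cb: "c \<le> b"
    and cond: "\<And>s. c < s \<Longrightarrow> s \<le> b \<Longrightarrow> real (s - c) * (\<Sum>k=s..b. w k) \<le> B2"
  shows "(\<Sum>k=Suc c..b. w k * (\<Sum>j=Suc c..k. g j)^2) \<le> 4 * B2 * (\<Sum>j=Suc c..b. (g j)^2)"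
proof -
  define N where "N = b - c"
  have bN: "b = N + c" using cb N_def by simp
  have h: "(\<Sum>m=1..N. w (m + c) * (\<Sum>i=1..m. g (i + c))^2) \<le> 4 * B2 * (\<Sum>i=1..N. (g (i + c))^2)"
  proof (rule hardy)
    fix s assume s: "1 \<le> s" "s \<le> N"
    have "(\<Sum>m=s..N. w (m + c)) = (\<Sum>k=s+c..N+c. w k)" by (rule sum.shift_bounds_cl_nat_ivl[symmetric])
    then show "real s * (\<Sum>m=s..N. w (m + c)) \<le> B2" using cond[of "s + c"] s bN by simp
  qed (use w in auto)
  have e1: "(\<Sum>k=Suc c..b. w k * (\<Sum>j=Suc c..k. g j)^2) = (\<Sum>m=1..N. w (m + c) * (\<Sum>i=1..m. g (i + c))^2)"
  proof -
    have "(\<Sum>k=Suc c..b. w k * (\<Sum>j=Suc c..k. g j)^2) = (\<Sum>m=1..N. w (m + c) * (\<Sum>j=Suc c..m + c. g j)^2)"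
      unfolding bN using sum.shift_bounds_cl_nat_ivl[of "\<lambda>k. w k * (\<Sum>j=Suc c..k. g j)^2" 1 c N] by simp
    also have "\<dots> = (\<Sum>m=1..N. w (m + c) * (\<Sum>i=1..m. g (i + c))^2)"
      by (rule sum.cong[OF refl]) (metis sum.shift_bounds_cl_nat_ivl plus_1_eq_Suc add.commute)
    finally show ?thesis .
  qed
  have e2: "(\<Sum>j=Suc c..b. (g j)^2) = (\<Sum>i=1..N. (g (i + c))^2)"
    unfolding bN using sum.shift_bounds_cl_nat_ivl[of "\<lambda>j. (g j)^2" 1 c N] by simp
  show ?thesis unfolding e1 e2 by (rule h)
qed

lemma hardyL:
  fixes w g :: "nat \<Rightarrow> real"
  assumes w: "\<And>m. 0 \<le> w m" and ac: "a \<le> c"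
    and cond: "\<And>s. a \<le> s \<Longrightarrow> s < c \<Longrightarrow> real (c - s) * (\<Sum>k=a..s. w k) \<le> A2"
  shows "(\<Sum>k\<in>{a..<c}. w k * (\<Sum>j=Suc k..c. g j)^2) \<le> 4 * A2 * (\<Sum>j=Suc a..c. (g j)^2)"
proof -
  define N where "N = c - a"
  have h: "(\<Sum>m=1..N. w (c - m) * (\<Sum>i=1..m. g (Suc c - i))^2) \<le> 4 * A2 * (\<Sum>i=1..N. (g (Suc c - i))^2)"
  proof (rule hardy)
    fix s assume s: "1 \<le> s" "s \<le> N"
    have "(\<Sum>m=s..N. w (c - m)) = (\<Sum>k=a..c - s. w k)"
      by (rule sum.reindex_bij_witness[where i="\<lambda>k. c - k" and j="\<lambda>m. c - m"]) (use s N_def ac in auto)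
    then show "real s * (\<Sum>m=s..N. w (c - m)) \<le> A2" using cond[of "c - s"] s N_def ac by simp
  qed (use w in auto)
  have inner: "(\<Sum>j=Suc (c - m)..c. g j) = (\<Sum>i=1..m. g (Suc c - i))" if "m \<le> N" for m
    by (rule sum.reindex_bij_witness[where i="\<lambda>i. Suc c - i" and j="\<lambda>j. Suc c - j"]) (use that N_def ac in auto)
  have e1: "(\<Sum>k\<in>{a..<c}. w k * (\<Sum>j=Suc k..c. g j)^2) = (\<Sum>m=1..N. w (c - m) * (\<Sum>i=1..m. g (Suc c - i))^2)"
  proof -
    have "(\<Sum>k\<in>{a..<c}. w k * (\<Sum>j=Suc k..c. g j)^2) = (\<Sum>m=1..N. w (c - m) * (\<Sum>j=Suc (c - m)..c. g j)^2)"
      by (rule sum.reindex_bij_witness[where i="\<lambda>k. c - k" and j="\<lambda>m. c - m"]) (use N_def ac in auto)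
    also have "\<dots> = (\<Sum>m=1..N. w (c - m) * (\<Sum>i=1..m. g (Suc c - i))^2)"
      by (rule sum.cong[OF refl]) (simp add: inner)
    finally show ?thesis .
  qed
  have e2: "(\<Sum>j=Suc a..c. (g j)^2) = (\<Sum>i=1..N. (g (Suc c - i))^2)"
    by (rule sum.reindex_bij_witness[where i="\<lambda>i. Suc c - i" and j="\<lambda>j. Suc c - j"]) (use N_def ac in auto)
  show ?thesis unfolding e1 e2 by (rule h)
qed



definition kf :: "(nat \<Rightarrow> complex) \<Rightarrow> nat set \<Rightarrow> (nat \<Rightarrow> complex) \<Rightarrow> real" where
  "kf \<alpha> I f = sqrt (\<Sum>k\<in>I. (cmod (Sf f k - Sf_avg \<alpha> f I))\<^sup>2 * (cmod (\<alpha> k))\<^sup>2)"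

lemma Kc_kf: "Kc \<alpha> I = Sup (kf \<alpha> I ` test_fns I)"
  unfolding Kc_def kf_def ..

lemma sq_le_of_sqrt_prod:
  assumes "sqrt x * sqrt y \<le> A" "0 \<le> x" "0 \<le> y"
  shows "x * y \<le> A^2"
proof -
  have "sqrt (x * y) \<le> A" using assms by (simp add: real_sqrt_mult)
  then have "(sqrt (x * y))^2 \<le> A^2" by (rule power_mono) (use assms in simp)
  then show ?thesis using assms by (simp add: mult_nonneg_nonneg)
qed

lemma norm_sum_sq: "(cmod (\<Sum>j\<in>J. f j))^2 \<le> (\<Sum>j\<in>J. cmod (f j))^2"
  by (rule power_mono[OF norm_sum]) simp

lemma upper:
  assumes ab: "a \<le> b" and f: "f \<in> test_fns {a..b}"
  shows "(\<Sum>k\<in>{a..b}. (cmod (Sf f k - Sf_avg \<alpha> f {a..b}))^2 * (cmod (\<alpha> k))^2) \<le> 4 * (Jc \<alpha> a b)^2"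
proof -
  define w where "w k = (cmod (\<alpha> k))^2" for k
  define g where "g j = cmod (f j)" for j
  have w0: "\<And>k. 0 \<le> w k" unfolding w_def by simp
  have "Jc \<alpha> a b \<in> (\<lambda>c. max (Ac \<alpha> a c) (Bc \<alpha> b c)) ` {a..b}"
    unfolding Jc_def by (rule Min_in) (use ab in auto)
  then obtain c where c: "a \<le> c" "c \<le> b" and J: "Jc \<alpha> a b = max (Ac \<alpha> a c) (Bc \<alpha> b c)" by auto
  define A where "A = Ac \<alpha> a c"
  define B where "B = Bc \<alpha> b c"
  have Ale: "sqrt (real (c - s)) * sqrt (\<Sum>k=a..s. (cmod (\<alpha> k))\<^sup>2) \<le> A" if "a \<le> s" "s \<le> c" for s
    unfolding A_def Ac_def by (rule Max_ge) (use that in auto)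
  have Ble: "sqrt (real (s - c)) * sqrt (\<Sum>k=s..b. (cmod (\<alpha> k))\<^sup>2) \<le> B" if "c \<le> s" "s \<le> b" for s
    unfolding B_def Bc_def by (rule Max_ge) (use that in auto)
  have A0: "0 \<le> A" using Ale[of c] c by simp
  have B0: "0 \<le> B" using Ble[of c] c by simp
  have condA: "real (c - s) * (\<Sum>k=a..s. w k) \<le> A^2" if "a \<le> s" "s < c" for s
    using sq_le_of_sqrt_prod[OF Ale[of s]] that unfolding w_def by (simp add: sum_nonneg)
  have condB: "real (s - c) * (\<Sum>k=s..b. w k) \<le> B^2" if "c < s" "s \<le> b" for s
    using sq_le_of_sqrt_prod[OF Ble[of s]] that unfolding w_def by (simp add: sum_nonneg)
  have AJ: "A^2 \<le> (Jc \<alpha> a b)^2" unfolding J A_def[symmetric] B_def[symmetric]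
    by (rule power_mono) (use A0 in auto)
  have BJ: "B^2 \<le> (Jc \<alpha> a b)^2" unfolding J A_def[symmetric] B_def[symmetric]
    by (rule power_mono) (use B0 in auto)
  have "(\<Sum>k\<in>{a..b}. (cmod (Sf f k - Sf_avg \<alpha> f {a..b}))^2 * (cmod (\<alpha> k))^2) \<le> (\<Sum>k\<in>{a..b}. (cmod (Sf f k - Sf f c))^2 * (cmod (\<alpha> k))^2)"
    by (rule avg_le) simp
  also have "\<dots> = (\<Sum>k\<in>{a..<c}. (cmod (Sf f k - Sf f c))^2 * w k) + (\<Sum>k\<in>{c..b}. (cmod (Sf f k - Sf f c))^2 * w k)"
  proof -
    have "{a..b} = {a..<c} \<union> {c..b}" using c by auto
    then show ?thesis unfolding w_def by (simp only:) (rule sum.union_disjoint, auto)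
  qed
  also have "(\<Sum>k\<in>{c..b}. (cmod (Sf f k - Sf f c))^2 * w k) = (\<Sum>k=Suc c..b. (cmod (Sf f k - Sf f c))^2 * w k)"
    using c by (simp add: sum.atLeast_Suc_atMost)
  also have "(\<Sum>k\<in>{a..<c}. (cmod (Sf f k - Sf f c))^2 * w k) = (\<Sum>k\<in>{a..<c}. w k * (cmod (\<Sum>j=Suc k..c. f j))^2)"
  proof (rule sum.cong[OF refl])
    fix k assume "k \<in> {a..<c}"
    then have "Sf f c = Sf f k + (\<Sum>j=Suc k..c. f j)" by (intro Sf_split) auto
    then show "(cmod (Sf f k - Sf f c))^2 * w k = w k * (cmod (\<Sum>j=Suc k..c. f j))^2"
      by (simp add: norm_minus_commute)
  qed
  also have "(\<Sum>k=Suc c..b. (cmod (Sf f k - Sf f c))^2 * w k) = (\<Sum>k=Suc c..b. w k * (cmod (\<Sum>j=Suc c..k. f j))^2)"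
  proof (rule sum.cong[OF refl])
    fix k assume "k \<in> {Suc c..b}"
    then have "Sf f k = Sf f c + (\<Sum>j=Suc c..k. f j)" by (intro Sf_split) auto
    then show "(cmod (Sf f k - Sf f c))^2 * w k = w k * (cmod (\<Sum>j=Suc c..k. f j))^2"
      by simp
  qed
  also have "(\<Sum>k\<in>{a..<c}. w k * (cmod (\<Sum>j=Suc k..c. f j))^2) \<le> (\<Sum>k\<in>{a..<c}. w k * (\<Sum>j=Suc k..c. g j)^2)"
    unfolding g_def by (intro sum_mono mult_left_mono norm_sum_sq w0)
  also have "(\<Sum>k=Suc c..b. w k * (cmod (\<Sum>j=Suc c..k. f j))^2) \<le> (\<Sum>k=Suc c..b. w k * (\<Sum>j=Suc c..k. g j)^2)"
    unfolding g_def by (intro sum_mono mult_left_mono norm_sum_sq w0)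
  also have "(\<Sum>k\<in>{a..<c}. w k * (\<Sum>j=Suc k..c. g j)^2) \<le> 4 * A^2 * (\<Sum>j=Suc a..c. (g j)^2)"
    by (rule hardyL[OF w0 c(1) condA])
  also have "(\<Sum>k=Suc c..b. w k * (\<Sum>j=Suc c..k. g j)^2) \<le> 4 * B^2 * (\<Sum>j=Suc c..b. (g j)^2)"
    by (rule hardyR[OF w0 c(2) condB])
  also have "4 * A^2 * (\<Sum>j=Suc a..c. (g j)^2) + 4 * B^2 * (\<Sum>j=Suc c..b. (g j)^2)
      \<le> 4 * (Jc \<alpha> a b)^2 * (\<Sum>j=Suc a..c. (g j)^2) + 4 * (Jc \<alpha> a b)^2 * (\<Sum>j=Suc c..b. (g j)^2)"
    using AJ BJ by (intro add_mono mult_right_mono) (auto intro: sum_nonneg)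
  also have "\<dots> = 4 * (Jc \<alpha> a b)^2 * ((\<Sum>j=Suc a..c. (g j)^2) + (\<Sum>j=Suc c..b. (g j)^2))"
    by (simp add: algebra_simps)
  also have "\<dots> \<le> 4 * (Jc \<alpha> a b)^2 * 1"
  proof (rule mult_left_mono)
    have "(\<Sum>j=Suc a..c. (g j)^2) + (\<Sum>j=Suc c..b. (g j)^2) = (\<Sum>j\<in>{Suc a..c} \<union> {Suc c..b}. (g j)^2)"
      by (rule sum.union_disjoint[symmetric]) auto
    also have "\<dots> \<le> (\<Sum>j\<in>{a..b}. (g j)^2)"
      by (rule sum_mono2) (use c in auto)
    also have "\<dots> \<le> 1"
      using f unfolding test_fns_def l2norm_on_def g_def by simp
    finally show "(\<Sum>j=Suc a..c. (g j)^2) + (\<Sum>j=Suc c..b. (g j)^2) \<le> 1" .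
  qed simp
  finally show ?thesis by simp
qed



lemma sum_split_at:
  fixes g :: "nat \<Rightarrow> real"
  assumes "a \<le> Suc s" "s \<le> b"
  shows "(\<Sum>k=a..b. g k) = (\<Sum>k=a..s. g k) + (\<Sum>k=Suc s..b. g k)"
proof -
  have "{a..b} = {a..s} \<union> {Suc s..b}" using assms by auto
  then show ?thesis by (simp only:) (rule sum.union_disjoint, auto)
qed

lemma kf_nonneg: "0 \<le> kf \<alpha> I f"
  unfolding kf_def by (simp add: sum_nonneg)

lemma lower:
  assumes pq: "a \<le> p" "p < q" "q \<le> b"
    and bdd: "bdd_above (kf \<alpha> {a..b} ` test_fns {a..b})"
  shows "real (q - p) * min (\<Sum>k=a..p. (cmod (\<alpha> k))^2) (\<Sum>k=q..b. (cmod (\<alpha> k))^2) \<le> 2 * (Kc \<alpha> {a..b})^2"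
proof -
  define t where "t = q - p"
  have t0: "real t > 0" using pq t_def by simp
  define cst where "cst = complex_of_real (1 / sqrt t)"
  have cst2: "(cmod cst)^2 = 1 / real t"
  proof -
    have "cmod cst = 1 / sqrt t" unfolding cst_def by (simp only: norm_of_real) simp
    then show ?thesis using t0 by (simp add: power_divide)
  qed
  define f where "f j = (if j \<in> {Suc p..q} then cst else 0)" for j
  have Sf_lo: "Sf f k = 0" if "k \<le> p" for k
    unfolding Sf_def f_def by (rule sum.neutral) (use that in auto)
  have Sf_hi: "Sf f k = complex_of_real (sqrt t)" if "q \<le> k" for k
  proof -
    have "Sf f k = (\<Sum>j\<in>{0..k} \<inter> {Suc p..q}. cst)"
      unfolding Sf_def f_def by (rule sum.inter_restrict[symmetric]) simp
    also have "{0..k} \<inter> {Suc p..q} = {Suc p..q}" using that by auto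
    also have "(\<Sum>j\<in>{Suc p..q}. cst) = complex_of_real (real t / sqrt t)"
      using t_def pq unfolding cst_def by (simp add: of_nat_diff)
    also have "real t / sqrt t = sqrt t" using t0 by (simp add: real_div_sqrt)
    finally show ?thesis .
  qed
  have fT: "f \<in> test_fns {a..b}"
  proof -
    have "(\<Sum>k\<in>{a..b}. (cmod (f k))\<^sup>2) = (\<Sum>k\<in>{a..b}. if k \<in> {Suc p..q} then 1 / real t else 0)"
      unfolding f_def using cst2 by (intro sum.cong) auto
    also have "\<dots> = (\<Sum>k\<in>{a..b} \<inter> {Suc p..q}. 1 / real t)"
      by (rule sum.inter_restrict[symmetric]) simp
    also have "{a..b} \<inter> {Suc p..q} = {Suc p..q}" using pq by auto
    also have "(\<Sum>k\<in>{Suc p..q}. 1 / real t) = 1" using t0 t_def by simp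
    finally show ?thesis unfolding test_fns_def l2norm_on_def f_def using pq by auto
  qed
  define m where "m = Sf_avg \<alpha> f {a..b}"
  define W1 where "W1 = (\<Sum>k=a..p. (cmod (\<alpha> k))^2)"
  define W2 where "W2 = (\<Sum>k=q..b. (cmod (\<alpha> k))^2)"
  have "(kf \<alpha> {a..b} f)^2 = (\<Sum>k\<in>{a..b}. (cmod (Sf f k - m))\<^sup>2 * (cmod (\<alpha> k))\<^sup>2)"
    unfolding kf_def m_def by (simp add: sum_nonneg)
  also have "\<dots> \<ge> (\<Sum>k\<in>{a..p} \<union> {q..b}. (cmod (Sf f k - m))\<^sup>2 * (cmod (\<alpha> k))\<^sup>2)"
    by (rule sum_mono2) (use pq in auto)
  also have "(\<Sum>k\<in>{a..p} \<union> {q..b}. (cmod (Sf f k - m))\<^sup>2 * (cmod (\<alpha> k))\<^sup>2)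
     = (\<Sum>k\<in>{a..p}. (cmod (Sf f k - m))\<^sup>2 * (cmod (\<alpha> k))\<^sup>2) + (\<Sum>k\<in>{q..b}. (cmod (Sf f k - m))\<^sup>2 * (cmod (\<alpha> k))\<^sup>2)"
    by (rule sum.union_disjoint) (use pq in auto)
  also have "(\<Sum>k\<in>{a..p}. (cmod (Sf f k - m))\<^sup>2 * (cmod (\<alpha> k))\<^sup>2) = (cmod m)^2 * W1"
    unfolding W1_def sum_distrib_left by (rule sum.cong) (auto simp: Sf_lo)
  also have "(\<Sum>k\<in>{q..b}. (cmod (Sf f k - m))\<^sup>2 * (cmod (\<alpha> k))\<^sup>2) = (cmod (complex_of_real (sqrt t) - m))^2 * W2"
    unfolding W2_def sum_distrib_left by (rule sum.cong) (auto simp: Sf_hi)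
  finally have kfb: "(cmod m)^2 * W1 + (cmod (complex_of_real (sqrt t) - m))^2 * W2 \<le> (kf \<alpha> {a..b} f)^2" .
  define x where "x = cmod m"
  define y where "y = cmod (complex_of_real (sqrt t) - m)"
  have xy: "sqrt t \<le> x + y"
  proof -
    have "cmod (complex_of_real (sqrt t)) \<le> cmod m + cmod (complex_of_real (sqrt t) - m)"
      by (metis add.commute diff_add_cancel norm_triangle_ineq)
    then show ?thesis unfolding x_def y_def by simp
  qed
  have x0: "0 \<le> x" and y0: "0 \<le> y" unfolding x_def y_def by simp_all
  have "real t \<le> 2 * (x^2 + y^2)"
  proof -
    have "(sqrt t)^2 \<le> (x + y)^2" by (rule power_mono[OF xy]) simp
    moreover have "(x + y)^2 \<le> 2 * (x^2 + y^2)"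
    proof -
      have "2 * (x^2 + y^2) - (x + y)^2 = (x - y)^2" by (simp add: power2_eq_square algebra_simps)
      moreover have "0 \<le> (x - y)^2" by simp
      ultimately show ?thesis by linarith
    qed
    ultimately show ?thesis by simp
  qed
  have W10: "0 \<le> W1" and W20: "0 \<le> W2" unfolding W1_def W2_def by (simp_all add: sum_nonneg)
  define M where "M = min W1 W2"
  have "real t * M \<le> 2 * (x^2 + y^2) * M"
    by (rule mult_right_mono) (use \<open>real t \<le> 2 * (x^2 + y^2)\<close> W10 W20 M_def in auto)
  also have "\<dots> \<le> 2 * (x^2 * W1 + y^2 * W2)"
  proof -
    have "x^2 * M \<le> x^2 * W1" "y^2 * M \<le> y^2 * W2" unfolding M_def
      by (simp_all add: mult_left_mono)
    then show ?thesis by (simp add: algebra_simps)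
  qed
  also have "\<dots> \<le> 2 * (kf \<alpha> {a..b} f)^2" using kfb unfolding x_def y_def by simp
  also have "\<dots> \<le> 2 * (Kc \<alpha> {a..b})^2"
  proof -
    have "kf \<alpha> {a..b} f \<le> Kc \<alpha> {a..b}" unfolding Kc_kf
      by (rule cSup_upper) (use fT bdd in auto)
    then show ?thesis by (simp add: power_mono kf_nonneg)
  qed
  finally show ?thesis unfolding t_def M_def W1_def W2_def .
qed



lemma sqrt_prod_le:
  assumes "0 \<le> x" "0 \<le> y" "x * y \<le> 2 * K^2" "0 \<le> K"
  shows "sqrt x * sqrt y \<le> 2 * K"
proof -
  have "sqrt x * sqrt y = sqrt (x * y)" by (simp add: real_sqrt_mult)
  also have "\<dots> \<le> sqrt ((2 * K)^2)"
  proof (intro real_sqrt_le_mono)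
    have "0 \<le> K * K" using assms by simp
    then show "x * y \<le> (2 * K)^2" using assms by (simp add: power2_eq_square, linarith)
  qed
  also have "\<dots> = 2 * K" by (rule real_sqrt_unique) (use assms in auto)
  finally show ?thesis .
qed

theorem lemma3p6:
  fixes \<alpha> :: "nat \<Rightarrow> complex" and a b :: nat
  assumes "summable (\<lambda>k. (cmod (\<alpha> k))\<^sup>2)"
    and "a \<le> b"
  shows "Jc \<alpha> a b / 2 \<le> Kc \<alpha> {a..b}
       \<and> Kc \<alpha> {a..b} = Lc \<alpha> {a..b} / sqrt 2
       \<and> Kc \<alpha> {a..b} \<le> 2 * Jc \<alpha> a b"
proof -
  note ab = assms(2)
  define T where "T = test_fns {a..b}"
  define K where "K = Kc \<alpha> {a..b}"
  define J where "J = Jc \<alpha> a b"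
  define w where "w k = (cmod (\<alpha> k))^2" for k
  have w0: "\<And>k. 0 \<le> w k" unfolding w_def by simp
  have KS: "K = Sup (kf \<alpha> {a..b} ` T)" unfolding K_def T_def by (rule Kc_kf)
  have zT: "(\<lambda>_. 0) \<in> T" unfolding T_def test_fns_def l2norm_on_def by simp
  have A0: "0 \<le> Ac \<alpha> a c" if "a \<le> c" for c
  proof -
    have "sqrt (real (c - c)) * sqrt (\<Sum>k=a..c. (cmod (\<alpha> k))\<^sup>2) \<le> Ac \<alpha> a c"
      unfolding Ac_def by (rule Max_ge) (use that in auto)
    then show ?thesis by simp
  qed
  have J0: "0 \<le> J"
  proof -
    have "Jc \<alpha> a b \<in> (\<lambda>c. max (Ac \<alpha> a c) (Bc \<alpha> b c)) ` {a..b}"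
      unfolding Jc_def by (rule Min_in) (use ab in auto)
    then obtain c where "a \<le> c" "J = max (Ac \<alpha> a c) (Bc \<alpha> b c)" unfolding J_def by auto
    then show ?thesis using A0[of c] by simp
  qed
  have kfb: "kf \<alpha> {a..b} f \<le> 2 * J" if "f \<in> T" for f
  proof -
    have "kf \<alpha> {a..b} f \<le> sqrt ((2 * J)^2)"
      unfolding kf_def using upper[OF ab, of f \<alpha>] that unfolding T_def J_def
      by (intro real_sqrt_le_mono) (simp add: power_mult_distrib)
    also have "sqrt ((2 * J)^2) = 2 * J" by (rule real_sqrt_unique) (use J0 in auto)
    finally show ?thesis .
  qed
  have bdd: "bdd_above (kf \<alpha> {a..b} ` T)"
    by (rule bdd_aboveI2[where M="2 * J"]) (rule kfb)
  have kfK: "kf \<alpha> {a..b} f \<le> K" if "f \<in> T" for f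
    unfolding KS by (rule cSup_upper) (use that bdd in auto)
  have K_le: "K \<le> 2 * J"
    unfolding KS by (rule cSup_least) (use zT kfb in auto)
  have K0: "0 \<le> K" using kfK[OF zT] kf_nonneg[of \<alpha> "{a..b}" "\<lambda>_. 0"] by linarith
  have bdd': "bdd_above (kf \<alpha> {a..b} ` test_fns {a..b})" using bdd unfolding T_def .
  have lowK: "real (q - p) * min (\<Sum>k=a..p. w k) (\<Sum>k=q..b. w k) \<le> 2 * K^2"
    if "a \<le> p" "p < q" "q \<le> b" for p q
    using lower[OF that bdd'] unfolding K_def w_def .
  have J_le: "J \<le> 2 * K"
  proof -
    define \<mu> where "\<mu> = (\<Sum>k=a..b. w k)"
    define P where "P c = (a \<le> c \<and> \<mu> \<le> 2 * (\<Sum>k=a..c. w k))" for c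
    define c where "c = (LEAST c. P c)"
    have Pb: "P b" unfolding P_def \<mu>_def using ab w0 by (simp add: sum_nonneg)
    have Pc: "P c" unfolding c_def by (rule LeastI[of P b, OF Pb])
    have cb: "c \<le> b" unfolding c_def by (rule Least_le[of P b, OF Pb])
    have ac: "a \<le> c" using Pc P_def by simp
    have notP: "\<not> P s" if "s < c" for s using not_less_Least[of s P] that c_def by simp
    have "J \<le> max (Ac \<alpha> a c) (Bc \<alpha> b c)"
      unfolding J_def Jc_def by (rule Min_le) (use ac cb in auto)
    moreover have "Ac \<alpha> a c \<le> 2 * K"
      unfolding Ac_def
    proof (rule Max.boundedI)
      show "(\<lambda>s. sqrt (real (c - s)) * sqrt (\<Sum>k = a..s. (cmod (\<alpha> k))\<^sup>2)) ` {a..c} \<noteq> {}" using ac by simp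
    next
      fix v assume "v \<in> (\<lambda>s. sqrt (real (c - s)) * sqrt (\<Sum>k = a..s. (cmod (\<alpha> k))\<^sup>2)) ` {a..c}"
      then obtain s where s: "a \<le> s" "s \<le> c" and v: "v = sqrt (real (c - s)) * sqrt (\<Sum>k=a..s. w k)"
        unfolding w_def by auto
      show "v \<le> 2 * K"
      proof (cases "s = c")
        case True then show ?thesis using v K0 by simp
      next
        case False
        then have sc: "s < c" using s by simp
        have c1: "Suc (c - 1) = c" using sc by simp
        have np: "\<not> P (c - 1)" using notP[of "c - 1"] sc by simp
        then have lt: "\<mu> > 2 * (\<Sum>k=a..c-1. w k)" unfolding P_def using s sc by auto
        have split: "\<mu> = (\<Sum>k=a..c-1. w k) + (\<Sum>k=c..b. w k)"
          unfolding \<mu>_def using sum_split_at[of a "c - 1" b w] c1 s sc cb by simp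
        have mono: "(\<Sum>k=a..s. w k) \<le> (\<Sum>k=a..c-1. w k)"
          by (rule sum_mono2) (use sc w0 in auto)
        have "min (\<Sum>k=a..s. w k) (\<Sum>k=c..b. w k) = (\<Sum>k=a..s. w k)"
          using lt split mono by simp
        then have "real (c - s) * (\<Sum>k=a..s. w k) \<le> 2 * K^2" using lowK[OF s(1) sc cb] by simp
        then show ?thesis unfolding v by (intro sqrt_prod_le) (use K0 w0 in \<open>auto intro: sum_nonneg\<close>)
      qed
    qed simp
    moreover have "Bc \<alpha> b c \<le> 2 * K"
      unfolding Bc_def
    proof (rule Max.boundedI)
      show "(\<lambda>s. sqrt (real (s - c)) * sqrt (\<Sum>k = s..b. (cmod (\<alpha> k))\<^sup>2)) ` {c..b} \<noteq> {}" using cb by simp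
    next
      fix v assume "v \<in> (\<lambda>s. sqrt (real (s - c)) * sqrt (\<Sum>k = s..b. (cmod (\<alpha> k))\<^sup>2)) ` {c..b}"
      then obtain s where s: "c \<le> s" "s \<le> b" and v: "v = sqrt (real (s - c)) * sqrt (\<Sum>k=s..b. w k)"
        unfolding w_def by auto
      show "v \<le> 2 * K"
      proof (cases "s = c")
        case True then show ?thesis using v K0 by simp
      next
        case False
        then have sc: "c < s" using s by simp
        have split: "\<mu> = (\<Sum>k=a..c. w k) + (\<Sum>k=Suc c..b. w k)"
          unfolding \<mu>_def using sum_split_at[of a c b w] ac cb by simp
        have mono: "(\<Sum>k=s..b. w k) \<le> (\<Sum>k=Suc c..b. w k)"
          by (rule sum_mono2) (use sc w0 in auto)
        have "min (\<Sum>k=a..c. w k) (\<Sum>k=s..b. w k) = (\<Sum>k=s..b. w k)"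
          using Pc split mono unfolding P_def by simp
        then have "real (s - c) * (\<Sum>k=s..b. w k) \<le> 2 * K^2" using lowK[OF ac sc s(2)] by simp
        then show ?thesis unfolding v by (intro sqrt_prod_le) (use K0 w0 in \<open>auto intro: sum_nonneg\<close>)
      qed
    qed simp
    ultimately show ?thesis by simp
  qed
  have KL: "K = Lc \<alpha> {a..b} / sqrt 2"
  proof (cases "\<forall>k\<in>{a..b}. \<alpha> k = 0")
    case True
    have "kf \<alpha> {a..b} f = 0" for f unfolding kf_def using True by simp
    then have "kf \<alpha> {a..b} ` T = {0}" using zT by auto
    then have "K = 0" unfolding KS by simp
    then show ?thesis unfolding Lc_def using True by simp
  next
    case False
    then obtain k0 where k0: "k0 \<in> {a..b}" "\<alpha> k0 \<noteq> 0" by auto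
    have mu0: "mu \<alpha> {a..b} \<noteq> 0"
    proof
      assume "mu \<alpha> {a..b} = 0"
      then have "\<forall>k\<in>{a..b}. (cmod (\<alpha> k))^2 = 0" unfolding mu_def
        by (subst sum_nonneg_eq_0_iff[symmetric]) auto
      then show False using k0 by auto
    qed
    have eqf: "lfun \<alpha> {a..b} f / mu \<alpha> {a..b} = 2 * (kf \<alpha> {a..b} f)^2" for f
      unfolding lfun_eq[OF finite_atLeastAtMost mu0] kf_def using mu0 by (simp add: sum_nonneg)
    define U where "U = Sup ((\<lambda>f. 2 * (kf \<alpha> {a..b} f)^2) ` T)"
    have L: "Lc \<alpha> {a..b} = sqrt U" unfolding Lc_def U_def T_def by (simp only: eqf if_not_P[OF False])
    have bddU: "bdd_above ((\<lambda>f. 2 * (kf \<alpha> {a..b} f)^2) ` T)"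
    proof (rule bdd_aboveI2[where M="2 * (2 * J)^2"])
      fix f assume "f \<in> T"
      then have "(kf \<alpha> {a..b} f)^2 \<le> (2 * J)^2" using kfb by (intro power_mono) (auto simp: kf_nonneg)
      then show "2 * (kf \<alpha> {a..b} f)^2 \<le> 2 * (2 * J)^2" by simp
    qed
    have Uf: "2 * (kf \<alpha> {a..b} f)^2 \<le> U" if "f \<in> T" for f
      unfolding U_def by (rule cSup_upper) (use that bddU in auto)
    have U0: "0 \<le> U" using Uf[OF zT] by (meson order_trans zero_le_power2 mult_nonneg_nonneg zero_le_numeral)
    have "U \<le> 2 * K^2"
      unfolding U_def
    proof (rule cSup_least)
      show "(\<lambda>f. 2 * (kf \<alpha> {a..b} f)^2) ` T \<noteq> {}" using zT by auto
    next
      fix x assume "x \<in> (\<lambda>f. 2 * (kf \<alpha> {a..b} f)^2) ` T"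
      then obtain f where f: "f \<in> T" "x = 2 * (kf \<alpha> {a..b} f)^2" by auto
      have "(kf \<alpha> {a..b} f)^2 \<le> K^2" by (rule power_mono[OF kfK[OF f(1)] kf_nonneg])
      then show "x \<le> 2 * K^2" using f by simp
    qed
    moreover have "K \<le> sqrt (U / 2)"
      unfolding KS
    proof (rule cSup_least)
      show "kf \<alpha> {a..b} ` T \<noteq> {}" using zT by auto
    next
      fix x assume "x \<in> kf \<alpha> {a..b} ` T"
      then obtain f where f: "f \<in> T" "x = kf \<alpha> {a..b} f" by auto
      have "x = sqrt (x^2)" using f kf_nonneg by simp
      also have "\<dots> \<le> sqrt (U / 2)" using Uf[OF f(1)] f by (intro real_sqrt_le_mono) simp
      finally show "x \<le> sqrt (U / 2)" .
    qed
    then have "K^2 \<le> (sqrt (U / 2))^2" using K0 by (intro power_mono) auto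
    then have "2 * K^2 \<le> U" using U0 by simp
    ultimately have "U = 2 * K^2" by simp
    then have "Lc \<alpha> {a..b} = sqrt 2 * K" unfolding L using K0 by (simp add: real_sqrt_mult)
    then show ?thesis by simp
  qed
  have "J / 2 \<le> K" using J_le by simp
  then show ?thesis using K_le KL unfolding K_def J_def by blast
qed

end
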